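(* Let $\mathcal H$ be a complex Hilbert space (of any dimension) and let $A_1,\ldots,A_n,B$ be closed subspaces of $\mathcal H$ ($n\ge 0$). Then $A_1\mathbin{\&}\cdots\mathbin{\&}A_n\le B$ if and only if $[A_n]\cdots[A_1]\mathcal H\subseteq B$.
   Context: In the orthomodular lattice of closed subspaces of $\mathcal H$ (order $\subseteq$, $\neg A=A^\perp$, $\vee$ closed span, $\wedge$ intersection), $A\mathbin{\&}B=(A\vee B^\perp)\wedge B$; $\&$ associates to the left and the empty $\&$-product ($n=0$) is $\mathcal H$. $[A]$ denotes the orthogonal projection onto $A$; for $n=0$ the product $[A_n]\cdots[A_1]$ is the identity. *)

theory Defs
  imports "HOL-Analysis.Analysis"
begin

class complex_vector = real_vector +
  fixes scaleC :: "complex \<Rightarrow> 'a \<Rightarrow> 'a"  (infixr \<open>*\<^sub>C\<close> 75)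
  assumes scaleC_add_right: "a *\<^sub>C (x + y) = a *\<^sub>C x + a *\<^sub>C y"
    and scaleC_add_left: "(a + b) *\<^sub>C x = a *\<^sub>C x + b *\<^sub>C x"
    and scaleC_scaleC: "a *\<^sub>C (b *\<^sub>C x) = (a * b) *\<^sub>C x"
    and scaleC_one: "1 *\<^sub>C x = x"
    and scaleR_scaleC: "scaleR r x = complex_of_real r *\<^sub>C x"

class complex_inner = complex_vector + real_normed_vector +
  fixes cinner :: "'a \<Rightarrow> 'a \<Rightarrow> complex"
  assumes cinner_commute: "cinner x y = cnj (cinner y x)"
    and cinner_add_left: "cinner (x + y) z = cinner x z + cinner y z"
    and cinner_scaleC_left: "cinner (r *\<^sub>C x) y = cnj r * cinner x y"
    and cinner_ge_zero: "0 \<le> Re (cinner x x)"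
    and cinner_eq_zero_iff: "cinner x x = 0 \<longleftrightarrow> x = 0"
    and norm_eq_sqrt_cinner: "norm x = sqrt (Re (cinner x x))"

class chilbert_space = complex_inner + complete_space

definition csubspace :: "'a::complex_vector set \<Rightarrow> bool" where
  "csubspace S \<longleftrightarrow> 0 \<in> S \<and> (\<forall>x\<in>S. \<forall>y\<in>S. x + y \<in> S) \<and> (\<forall>c. \<forall>x\<in>S. c *\<^sub>C x \<in> S)"

definition closed_csubspace :: "'a::complex_inner set \<Rightarrow> bool" where
  "closed_csubspace S \<longleftrightarrow> csubspace S \<and> closed S"

definition orthc :: "'a::complex_inner set \<Rightarrow> 'a set" where
  "orthc A = {x. \<forall>y\<in>A. cinner y x = 0}"

definition cjoin :: "'a::complex_inner set \<Rightarrow> 'a set \<Rightarrow> 'a set" where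
  "cjoin A B = \<Inter>{C. closed_csubspace C \<and> A \<union> B \<subseteq> C}"

text \<open>Sasaki product \<open>A & B = (A \<or> B\<^sup>\<perp>) \<and> B\<close>.\<close>
definition sand :: "'a::complex_inner set \<Rightarrow> 'a set \<Rightarrow> 'a set" where
  "sand A B = cjoin A (orthc B) \<inter> B"

fun sand_prod :: "(nat \<Rightarrow> 'a::complex_inner set) \<Rightarrow> nat \<Rightarrow> 'a set" where
  "sand_prod A 0 = UNIV"
| "sand_prod A (Suc n) = (if n = 0 then A 1 else sand (sand_prod A n) (A (Suc n)))"

definition cproj :: "'a::complex_inner set \<Rightarrow> 'a \<Rightarrow> 'a" where
  "cproj A x = (THE y. y \<in> A \<and> x - y \<in> orthc A)"

fun cproj_prod :: "(nat \<Rightarrow> 'a::complex_inner set) \<Rightarrow> nat \<Rightarrow> 'a \<Rightarrow> 'a" where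
  "cproj_prod A 0 = id"
| "cproj_prod A (Suc n) = cproj (A (Suc n)) \<circ> cproj_prod A n"

end

theory Submission
  imports Defs
begin

lemma scaleC_zero_left[simp]: "(0::complex) *\<^sub>C (x::'a::complex_vector) = 0"
  using scaleR_scaleC[of 0 x] by simp

lemma scaleC_minus1: "(-1::complex) *\<^sub>C (x::'a::complex_vector) = - x"
  using scaleR_scaleC[of "-1" x] by simp

lemma scaleC_zero_right[simp]: "c *\<^sub>C (0::'a::complex_vector) = 0"
proof -
  have "c *\<^sub>C (0::'a) = c *\<^sub>C 0 + c *\<^sub>C 0" using scaleC_add_right[of c 0 "0::'a"] by simp
  then show ?thesis by simp
qed

lemma cinner_add_right: "cinner (x::'a::complex_inner) (y + z) = cinner x y + cinner x z"
  by (subst (1 2 3) cinner_commute) (simp add: cinner_add_left)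

lemma cinner_scaleC_right: "cinner (x::'a::complex_inner) (r *\<^sub>C y) = r * cinner x y"
  by (subst (1 2) cinner_commute) (simp add: cinner_scaleC_left)

lemma cinner_zero_left[simp]: "cinner 0 (y::'a::complex_inner) = 0"
  using cinner_add_left[of "0::'a" 0 y] by simp

lemma cinner_zero_right[simp]: "cinner (y::'a::complex_inner) 0 = 0"
  using cinner_add_right[of y "0::'a" 0] by simp

lemma cinner_minus_left: "cinner (- x) (y::'a::complex_inner) = - cinner x y"
  using cinner_scaleC_left[of "-1" x y] by (simp add: scaleC_minus1)

lemma cinner_minus_right: "cinner y (- x::'a::complex_inner) = - cinner y x"
  using cinner_scaleC_right[of y "-1" x] by (simp add: scaleC_minus1)

lemma cinner_diff_left: "cinner (x - z) (y::'a::complex_inner) = cinner x y - cinner z y"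
  using cinner_add_left[of x "-z" y] by (simp add: cinner_minus_left)

lemma cinner_diff_right: "cinner y (x - z::'a::complex_inner) = cinner y x - cinner y z"
  using cinner_add_right[of y x "-z"] by (simp add: cinner_minus_right)

lemma cinner_self: "cinner (x::'a::complex_inner) x = complex_of_real ((norm x)\<^sup>2)"
proof -
  have "Im (cinner x x) = Im (cnj (cinner x x))" using cinner_commute[of x x] by simp
  then have "Im (cinner x x) = 0" by simp
  moreover have "Re (cinner x x) = (norm x)\<^sup>2" using norm_eq_sqrt_cinner[of x] cinner_ge_zero[of x] by simp
  ultimately show ?thesis by (simp add: complex_eq_iff)
qed

lemma Re_cinner_sym: "Re (cinner (y::'a::complex_inner) x) = Re (cinner x y)"
  by (subst cinner_commute) simp

lemma norm_add_sq: "(norm (x + y::'a::complex_inner))\<^sup>2 = (norm x)\<^sup>2 + (norm y)\<^sup>2 + 2 * Re (cinner x y)"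
proof -
  have "complex_of_real ((norm (x+y))\<^sup>2) = cinner x x + cinner x y + cinner y x + cinner y y"
    using cinner_self[of "x+y"] by (simp add: cinner_add_left cinner_add_right algebra_simps)
  then have "(norm (x+y))\<^sup>2 = Re (cinner x x + cinner x y + cinner y x + cinner y y)"
    by (metis Re_complex_of_real)
  then show ?thesis by (simp add: cinner_self Re_cinner_sym[of y x])
qed

lemma norm_diff_sq: "(norm (x - y::'a::complex_inner))\<^sup>2 = (norm x)\<^sup>2 + (norm y)\<^sup>2 - 2 * Re (cinner x y)"
  using norm_add_sq[of x "-y"] by (simp add: cinner_minus_right)

lemma Re_cinner_polar: "Re (cinner (y::'a::complex_inner) x) = ((norm (y+x))\<^sup>2 - (norm (y-x))\<^sup>2) / 4"
  by (simp add: norm_add_sq norm_diff_sq)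

lemma Im_cinner_polar: "Im (cinner (y::'a::complex_inner) x) = Re (cinner (\<i> *\<^sub>C y) x)"
  by (simp add: cinner_scaleC_left)

lemma cinner_scaleR_left: "cinner (r *\<^sub>R x) (y::'a::complex_inner) = complex_of_real r * cinner x y"
  by (simp add: scaleR_scaleC cinner_scaleC_left)

lemma cinner_scaleR_right: "cinner y (r *\<^sub>R x::'a::complex_inner) = complex_of_real r * cinner y x"
  by (simp add: scaleR_scaleC cinner_scaleC_right)


lemma csubspace_0: "csubspace S \<Longrightarrow> 0 \<in> S" by (simp add: csubspace_def)
lemma csubspace_add: "csubspace S \<Longrightarrow> x \<in> S \<Longrightarrow> y \<in> S \<Longrightarrow> x + y \<in> S" by (simp add: csubspace_def)
lemma csubspace_scaleC: "csubspace S \<Longrightarrow> x \<in> S \<Longrightarrow> c *\<^sub>C x \<in> S" by (simp add: csubspace_def)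
lemma csubspace_scaleR: "csubspace S \<Longrightarrow> x \<in> S \<Longrightarrow> r *\<^sub>R x \<in> S" by (simp add: csubspace_def scaleR_scaleC)
lemma csubspace_minus: "csubspace S \<Longrightarrow> x \<in> S \<Longrightarrow> - x \<in> S"
  by (metis csubspace_scaleC scaleC_minus1)
lemma csubspace_diff: "csubspace S \<Longrightarrow> x \<in> S \<Longrightarrow> y \<in> S \<Longrightarrow> x - y \<in> S"
  by (metis csubspace_add csubspace_minus diff_conv_add_uminus)

lemma orthc_csubspace: "csubspace (orthc (S::'a::complex_inner set))"
  unfolding csubspace_def orthc_def by (simp add: cinner_add_right cinner_scaleC_right)

lemma cinner_eq0_iff: "cinner (y::'a::complex_inner) x = 0 \<longleftrightarrow>
   ((norm (y+x))\<^sup>2 - (norm (y-x))\<^sup>2) / 4 = 0 \<and> ((norm (\<i> *\<^sub>C y+x))\<^sup>2 - (norm (\<i> *\<^sub>C y-x))\<^sup>2) / 4 = 0"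
  by (simp add: complex_eq_iff Im_cinner_polar Re_cinner_polar[symmetric] del: cinner_scaleC_left)

lemma closed_orth1: "closed {x. cinner (y::'a::complex_inner) x = 0}"
proof -
  have "{x. cinner y x = 0} = {x. ((norm (y+x))\<^sup>2 - (norm (y-x))\<^sup>2) / 4 = 0} \<inter>
     {x. ((norm (\<i> *\<^sub>C y+x))\<^sup>2 - (norm (\<i> *\<^sub>C y-x))\<^sup>2) / 4 = 0}"
    using cinner_eq0_iff by blast
  moreover have "closed {x. ((norm (y+x))\<^sup>2 - (norm (y-x))\<^sup>2) / 4 = (0::real)}"
    by (intro closed_Collect_eq continuous_intros) auto
  moreover have "closed {x. ((norm (\<i> *\<^sub>C y+x))\<^sup>2 - (norm (\<i> *\<^sub>C y-x))\<^sup>2) / 4 = (0::real)}"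
    by (intro closed_Collect_eq continuous_intros) auto
  ultimately show ?thesis by auto
qed

lemma closed_orthc: "closed (orthc (S::'a::complex_inner set))"
proof -
  have "orthc S = (\<Inter>y\<in>S. {x. cinner y x = 0})" unfolding orthc_def by auto
  then show ?thesis using closed_orth1 by auto
qed

lemma closed_csubspace_orthc: "closed_csubspace (orthc (S::'a::complex_inner set))"
  by (simp add: closed_csubspace_def orthc_csubspace closed_orthc)

lemma orthcD: "z \<in> orthc S \<Longrightarrow> y \<in> S \<Longrightarrow> cinner y z = 0" by (simp add: orthc_def)
lemma orthcD': "z \<in> orthc S \<Longrightarrow> y \<in> S \<Longrightarrow> cinner z y = 0"
  by (metis orthcD cinner_commute complex_cnj_zero)

lemma real_quad_lemma:
  fixes N R :: real
  assumes "\<forall>t. 0 \<le> t\<^sup>2 * N - 2 * t * R" and "0 \<le> N"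
  shows "R = 0"
proof -
  define t where "t = R / (N + 1)"
  have pos: "N + 1 > 0" using assms(2) by simp
  have "0 \<le> t\<^sup>2 * N - 2 * t * R" using assms(1) by simp
  then have "0 \<le> (t\<^sup>2 * N - 2 * t * R) * (N+1)\<^sup>2" using pos by simp
  also have "(t\<^sup>2 * N - 2 * t * R) * (N+1)\<^sup>2 = R\<^sup>2 * N - 2 * R\<^sup>2 * (N+1)"
  proof -
    have tN: "t * (N+1) = R" unfolding t_def using pos by simp
    have "(t\<^sup>2 * N - 2 * t * R) * (N+1)\<^sup>2 = (t*(N+1))\<^sup>2*N - 2*(t*(N+1))*R*(N+1)"
      by (simp add: algebra_simps power2_eq_square)
    then show ?thesis unfolding tN by (simp add: power2_eq_square)
  qed
  also have "\<dots> = - (R\<^sup>2 * (N + 2))" by (simp add: algebra_simps)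
  finally have "R\<^sup>2 * (N + 2) \<le> 0" by simp
  moreover have "N + 2 > 0" using assms(2) by simp
  ultimately have "R\<^sup>2 \<le> 0" by (simp add: mult_le_0_iff)
  then show ?thesis by simp
qed

lemma proj_exists:
  fixes C :: "'a::chilbert_space set"
  assumes "closed_csubspace C"
  shows "\<exists>y\<in>C. x - y \<in> orthc C"
proof -
  have sub: "csubspace C" and cl: "closed C" using assms by (auto simp: closed_csubspace_def)
  define D where "D = (\<lambda>c. norm (x - c)) ` C"
  define d where "d = Inf D"
  have ne: "D \<noteq> {}" using csubspace_0[OF sub] D_def by auto
  have bdd: "bdd_below D" unfolding D_def by (rule bdd_belowI[of _ 0]) auto
  have dle: "d \<le> norm (x - c)" if "c \<in> C" for c
    unfolding d_def using cInf_lower[OF _ bdd] that D_def by auto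
  have d0: "0 \<le> d" unfolding d_def using ne by (intro cInf_greatest) (auto simp: D_def)
  have ex: "\<exists>c\<in>C. (norm (x - c))\<^sup>2 < d\<^sup>2 + inverse (real (Suc n))" for n
  proof -
    define s where "s = sqrt (d\<^sup>2 + inverse (real (Suc n)))"
    have "d\<^sup>2 < d\<^sup>2 + inverse (real (Suc n))" by simp
    then have "sqrt (d\<^sup>2) < s" unfolding s_def by (rule real_sqrt_less_mono)
    then have "Inf D < s" using d0 d_def by simp
    then obtain v where "v \<in> D" "v < s" using cInf_lessD[OF ne] by blast
    then obtain c where c: "c \<in> C" "norm (x - c) < s" unfolding D_def by auto
    then have "(norm (x - c))\<^sup>2 < s\<^sup>2" by (intro power_strict_mono) auto
    also have "s\<^sup>2 = d\<^sup>2 + inverse (real (Suc n))" unfolding s_def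
      by (simp add: add_nonneg_nonneg)
    finally show ?thesis using c by blast
  qed
  then obtain c where c: "\<And>n. c n \<in> C" "\<And>n. (norm (x - c n))\<^sup>2 < d\<^sup>2 + inverse (real (Suc n))"
    by metis
  have para: "(norm (c m - c n))\<^sup>2 \<le> 2 * inverse (real (Suc m)) + 2 * inverse (real (Suc n))" for m n
  proof -
    define a where "a = x - c m"
    define b where "b = x - c n"
    define mid where "mid = (1/2::real) *\<^sub>R (c m + c n)"
    have midC: "mid \<in> C" unfolding mid_def by (intro csubspace_scaleR csubspace_add sub c)
    have ab: "a + b = 2 *\<^sub>R (x - mid)" unfolding a_def b_def mid_def by (simp add: algebra_simps scaleR_2)
    have "(norm (a + b))\<^sup>2 = 4 * (norm (x - mid))\<^sup>2" unfolding ab by (simp add: power2_eq_square)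
    moreover have "d\<^sup>2 \<le> (norm (x - mid))\<^sup>2" using dle[OF midC] d0 by (simp add: power_mono)
    ultimately have 1: "4 * d\<^sup>2 \<le> (norm (a + b))\<^sup>2" by simp
    have 2: "(norm (a + b))\<^sup>2 + (norm (a - b))\<^sup>2 = 2 * (norm a)\<^sup>2 + 2 * (norm b)\<^sup>2"
      by (simp add: norm_add_sq norm_diff_sq)
    have 3: "a - b = c n - c m" unfolding a_def b_def by simp
    have "norm (c m - c n) = norm (a - b)" unfolding 3 by (simp add: norm_minus_commute)
    then show ?thesis using 1 2 c(2)[of m] c(2)[of n] unfolding a_def[symmetric] b_def[symmetric] by simp
  qed
  have "Cauchy c"
  proof (rule CauchyI)
    fix e :: real assume e: "0 < e"
    then have "0 < e\<^sup>2 / 4" by simp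
    then obtain M where M: "inverse (real (Suc M)) < e\<^sup>2 / 4" using reals_Archimedean by blast
    have "norm (c m - c n) < e" if "m \<ge> M" "n \<ge> M" for m n
    proof -
      have "inverse (real (Suc m)) \<le> inverse (real (Suc M))" using that by (simp add: le_imp_inverse_le)
      moreover have "inverse (real (Suc n)) \<le> inverse (real (Suc M))" using that by (simp add: le_imp_inverse_le)
      ultimately have "(norm (c m - c n))\<^sup>2 < e\<^sup>2" using para[of m n] M by linarith
      then show ?thesis using power2_less_imp_less[OF _ less_imp_le[OF e]] by blast
    qed
    then show "\<exists>M. \<forall>m\<ge>M. \<forall>n\<ge>M. norm (c m - c n) < e" by blast
  qed
  then obtain y where lim: "c \<longlonglongrightarrow> y" using Cauchy_convergent convergent_def by blast
  have yC: "y \<in> C" using closed_sequentially[OF cl c(1) lim] .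
  have "(norm (x - y))\<^sup>2 \<le> d\<^sup>2"
  proof (rule LIMSEQ_le)
    show "(\<lambda>n. (norm (x - c n))\<^sup>2) \<longlonglongrightarrow> (norm (x - y))\<^sup>2" by (intro tendsto_intros lim)
    show "(\<lambda>n. d\<^sup>2 + inverse (real (Suc n))) \<longlonglongrightarrow> d\<^sup>2" by (rule LIMSEQ_inverse_real_of_nat_add)
    show "\<exists>N. \<forall>n\<ge>N. (norm (x - c n))\<^sup>2 \<le> d\<^sup>2 + inverse (real (Suc n))" using c(2) less_imp_le by blast
  qed
  then have mini: "(norm (x - y))\<^sup>2 \<le> (norm (x - v))\<^sup>2" if "v \<in> C" for v
    using dle[OF that] d0 power_mono[of d "norm (x - v)" 2] by linarith
  define z where "z = x - y"
  have reo: "Re (cinner v z) = 0" if "v \<in> C" for v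
  proof (rule real_quad_lemma[of "(norm v)\<^sup>2"])
    show "\<forall>t. 0 \<le> t\<^sup>2 * (norm v)\<^sup>2 - 2 * t * Re (cinner v z)"
    proof
      fix t :: real
      have "y + t *\<^sub>R v \<in> C" by (intro csubspace_add csubspace_scaleR sub yC that)
      then have "(norm z)\<^sup>2 \<le> (norm (z - t *\<^sub>R v))\<^sup>2" using mini unfolding z_def by (simp add: algebra_simps)
      also have "\<dots> = (norm z)\<^sup>2 + t\<^sup>2 * (norm v)\<^sup>2 - 2 * t * Re (cinner v z)"
        by (simp add: norm_diff_sq cinner_scaleR_right Re_cinner_sym[of v z] power_mult_distrib)
      finally show "0 \<le> t\<^sup>2 * (norm v)\<^sup>2 - 2 * t * Re (cinner v z)" by simp
    qed
  qed simp
  have "cinner v z = 0" if "v \<in> C" for v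
  proof -
    have "\<i> *\<^sub>C v \<in> C" by (intro csubspace_scaleC sub that)
    then have "Im (cinner v z) = 0" using reo Im_cinner_polar by metis
    then show ?thesis using reo[OF that] by (simp add: complex_eq_iff)
  qed
  then have "z \<in> orthc C" by (simp add: orthc_def)
  then show ?thesis using yC z_def by blast
qed


lemma proj_unique:
  assumes "closed_csubspace (C::'a::complex_inner set)" "y1 \<in> C" "y2 \<in> C"
    "x - y1 \<in> orthc C" "x - y2 \<in> orthc C"
  shows "y1 = y2"
proof -
  have sub: "csubspace C" using assms(1) by (simp add: closed_csubspace_def)
  have "y1 - y2 \<in> C" using assms by (intro csubspace_diff sub)
  moreover have "y1 - y2 = (x - y2) - (x - y1)" by simp
  then have "y1 - y2 \<in> orthc C" using assms(4,5) by (metis csubspace_diff orthc_csubspace)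
  ultimately have "cinner (y1 - y2) (y1 - y2) = 0" using orthcD by blast
  then show ?thesis using cinner_eq_zero_iff[of "y1 - y2"] by simp
qed

lemma cproj_spec:
  fixes C :: "'a::chilbert_space set"
  assumes "closed_csubspace C"
  shows "cproj C x \<in> C \<and> x - cproj C x \<in> orthc C"
proof -
  have "\<exists>!y. y \<in> C \<and> x - y \<in> orthc C"
    using proj_exists[OF assms] proj_unique[OF assms] by blast
  then show ?thesis unfolding cproj_def by (rule theI')
qed

lemma cproj_eq:
  fixes C :: "'a::chilbert_space set"
  assumes "closed_csubspace C" "y \<in> C" "x - y \<in> orthc C"
  shows "cproj C x = y"
  using cproj_spec[OF assms(1), of x] proj_unique[OF assms(1)] assms by blast

lemma cproj_add:
  fixes C :: "'a::chilbert_space set"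
  assumes "closed_csubspace C"
  shows "cproj C (x + y) = cproj C x + cproj C y"
proof (rule cproj_eq[OF assms])
  have sub: "csubspace C" using assms by (simp add: closed_csubspace_def)
  show "cproj C x + cproj C y \<in> C" using cproj_spec[OF assms] by (intro csubspace_add sub) auto
  have "x + y - (cproj C x + cproj C y) = (x - cproj C x) + (y - cproj C y)" by simp
  then show "x + y - (cproj C x + cproj C y) \<in> orthc C"
    using cproj_spec[OF assms] by (metis csubspace_add orthc_csubspace)
qed

lemma cproj_scaleC:
  fixes C :: "'a::chilbert_space set"
  assumes "closed_csubspace C"
  shows "cproj C (c *\<^sub>C x) = c *\<^sub>C cproj C x"
proof (rule cproj_eq[OF assms])
  have sub: "csubspace C" using assms by (simp add: closed_csubspace_def)
  show "c *\<^sub>C cproj C x \<in> C" using cproj_spec[OF assms] by (intro csubspace_scaleC sub) auto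
  have "c *\<^sub>C x - c *\<^sub>C cproj C x = c *\<^sub>C (x - cproj C x)"
    by (metis add_diff_cancel_right' diff_add_cancel scaleC_add_right)
  then show "c *\<^sub>C x - c *\<^sub>C cproj C x \<in> orthc C"
    using cproj_spec[OF assms] by (metis csubspace_scaleC orthc_csubspace)
qed

lemma cproj_norm:
  fixes C :: "'a::chilbert_space set"
  assumes "closed_csubspace C"
  shows "norm (cproj C x) \<le> norm x"
proof -
  define p where "p = cproj C x"
  define q where "q = x - p"
  have "cinner p q = 0" using cproj_spec[OF assms, of x] orthcD unfolding p_def q_def by blast
  then have "(norm x)\<^sup>2 = (norm p)\<^sup>2 + (norm q)\<^sup>2" using norm_add_sq[of p q] unfolding q_def by simp
  then have "(norm p)\<^sup>2 \<le> (norm x)\<^sup>2" by simp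
  then show ?thesis unfolding p_def using power2_le_imp_le by fastforce
qed

lemma cproj_bounded_linear:
  fixes C :: "'a::chilbert_space set"
  assumes "closed_csubspace C"
  shows "bounded_linear (cproj C)"
proof (rule bounded_linear_intro[where K=1])
  show "cproj C (x + y) = cproj C x + cproj C y" for x y by (rule cproj_add[OF assms])
  show "cproj C (r *\<^sub>R x) = r *\<^sub>R cproj C x" for r x by (simp add: scaleR_scaleC cproj_scaleC[OF assms])
  show "norm (cproj C x) \<le> norm x * 1" for x using cproj_norm[OF assms] by simp
qed

lemma preimage_closed_csubspace:
  fixes A B :: "'a::chilbert_space set"
  assumes "closed_csubspace A" "closed_csubspace B"
  shows "closed_csubspace (cproj A -` B)"
proof -
  have subB: "csubspace B" and clB: "closed B" using assms(2) by (auto simp: closed_csubspace_def)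
  have z: "cproj A 0 = 0" using cproj_eq[OF assms(1), of 0 0] assms(1)
    by (simp add: closed_csubspace_def csubspace_0 orthc_csubspace)
  have "csubspace (cproj A -` B)" unfolding csubspace_def
    using z subB by (auto simp: cproj_add[OF assms(1)] cproj_scaleC[OF assms(1)] csubspace_0 csubspace_add csubspace_scaleC)
  moreover have "closed (cproj A -` B)"
    using continuous_on_closed_vimage[of UNIV "cproj A"] clB linear_continuous_on[OF cproj_bounded_linear[OF assms(1)]]
    by simp
  ultimately show ?thesis by (simp add: closed_csubspace_def)
qed

lemma in_closed_by_orth:
  fixes B :: "'a::chilbert_space set"
  assumes "closed_csubspace B" "\<forall>z\<in>orthc B. cinner z x = 0"
  shows "x \<in> B"
proof -
  define p where "p = cproj B x"
  define z where "z = x - p"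
  have p: "p \<in> B" and zo: "z \<in> orthc B" using cproj_spec[OF assms(1), of x] unfolding p_def z_def by auto
  have "cinner z z = cinner z x - cinner z p" unfolding z_def by (simp add: cinner_diff_right)
  also have "\<dots> = 0" using assms(2) zo orthcD'[OF zo p] by simp
  finally have "z = 0" using cinner_eq_zero_iff[of z] by simp
  then show ?thesis using p unfolding z_def by simp
qed

lemma cjoin_least: "closed_csubspace C \<Longrightarrow> S \<union> T \<subseteq> C \<Longrightarrow> cjoin S T \<subseteq> C"
  unfolding cjoin_def by auto

lemma cjoin_csubspace: "csubspace (cjoin S T)"
  unfolding csubspace_def cjoin_def closed_csubspace_def by auto

lemma cjoin_upper: "S \<union> T \<subseteq> cjoin S T"
  unfolding cjoin_def by auto

lemma sand_UNIV: "sand UNIV A = A"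
  unfolding sand_def cjoin_def by auto

lemma key:
  fixes A B :: "'a::chilbert_space set" and S :: "'a set"
  assumes A: "closed_csubspace A" and B: "closed_csubspace B"
  shows "sand S A \<subseteq> B \<longleftrightarrow> cproj A ` S \<subseteq> B"
proof
  assume h: "sand S A \<subseteq> B"
  show "cproj A ` S \<subseteq> B"
  proof
    fix v assume "v \<in> cproj A ` S"
    then obtain s where s: "s \<in> S" and v: "v = cproj A s" by blast
    have vA: "v \<in> A" and so: "s - v \<in> orthc A" using cproj_spec[OF A, of s] v by auto
    have "s \<in> cjoin S (orthc A)" "s - v \<in> cjoin S (orthc A)" using cjoin_upper s so by auto
    then have "s - (s - v) \<in> cjoin S (orthc A)" using csubspace_diff[OF cjoin_csubspace] by blast
    then have "v \<in> cjoin S (orthc A)" by simp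
    then have "v \<in> sand S A" using vA by (simp add: sand_def)
    then show "v \<in> B" using h by blast
  qed
next
  assume h: "cproj A ` S \<subseteq> B"
  show "sand S A \<subseteq> B"
  proof
    fix x assume "x \<in> sand S A"
    then have xj: "x \<in> cjoin S (orthc A)" and xA: "x \<in> A" by (auto simp: sand_def)
    show "x \<in> B"
    proof (rule in_closed_by_orth[OF B], intro ballI)
      fix z assume zB: "z \<in> orthc B"
      define w where "w = cproj A z"
      have wA: "w \<in> A" and zw: "z - w \<in> orthc A" using cproj_spec[OF A, of z] unfolding w_def by auto
      have 1: "cinner z x = cinner w x + cinner (z - w) x" by (simp add: cinner_diff_left)
      have 2: "cinner (z - w) x = 0" using orthcD'[OF zw xA] .
      have "S \<union> orthc A \<subseteq> orthc {w}"
      proof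
        fix v assume "v \<in> S \<union> orthc A"
        then show "v \<in> orthc {w}"
        proof
          assume vS: "v \<in> S"
          define pv where "pv = cproj A v"
          have pA: "pv \<in> A" and vo: "v - pv \<in> orthc A" using cproj_spec[OF A, of v] unfolding pv_def by auto
          have pB: "pv \<in> B" using h vS pv_def by blast
          have "cinner w v = cinner w pv + cinner w (v - pv)" by (simp add: cinner_diff_right)
          also have "cinner w (v - pv) = 0" using orthcD[OF vo wA] .
          also have "cinner w pv = cinner z pv - cinner (z - w) pv" by (simp add: cinner_diff_left)
          also have "cinner z pv = 0" using orthcD'[OF zB pB] .
          also have "cinner (z - w) pv = 0" using orthcD'[OF zw pA] .
          finally show ?thesis by (simp add: orthc_def)
        next
          assume "v \<in> orthc A"
          then show ?thesis using orthcD[OF _ wA] by (simp add: orthc_def)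
        qed
      qed
      then have "x \<in> orthc {w}" using cjoin_least[OF closed_csubspace_orthc] xj by blast
      then have "cinner w x = 0" by (simp add: orthc_def)
      then show "cinner z x = 0" using 1 2 by simp
    qed
  qed
qed

lemma main_gen:
  fixes A :: "nat \<Rightarrow> 'a::chilbert_space set"
  shows "(\<forall>i\<in>{1..n}. closed_csubspace (A i)) \<Longrightarrow> closed_csubspace B \<Longrightarrow>
    (sand_prod A n \<subseteq> B \<longleftrightarrow> range (cproj_prod A n) \<subseteq> B)"
proof (induction n arbitrary: B)
  case 0
  then show ?case by simp
next
  case (Suc n)
  have A': "closed_csubspace (A (Suc n))" using Suc.prems(1) by auto
  have prem: "\<forall>i\<in>{1..n}. closed_csubspace (A i)" using Suc.prems(1) by auto
  have sp: "sand_prod A (Suc n) = sand (sand_prod A n) (A (Suc n))"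
    by (cases "n = 0") (simp_all add: sand_UNIV)
  have rg: "range (cproj_prod A (Suc n)) = cproj (A (Suc n)) ` range (cproj_prod A n)"
    by (simp add: image_comp)
  have B': "closed_csubspace (cproj (A (Suc n)) -` B)"
    by (rule preimage_closed_csubspace[OF A' Suc.prems(2)])
  have "sand_prod A (Suc n) \<subseteq> B \<longleftrightarrow> cproj (A (Suc n)) ` sand_prod A n \<subseteq> B"
    unfolding sp by (rule key[OF A' Suc.prems(2)])
  also have "\<dots> \<longleftrightarrow> sand_prod A n \<subseteq> cproj (A (Suc n)) -` B" by blast
  also have "\<dots> \<longleftrightarrow> range (cproj_prod A n) \<subseteq> cproj (A (Suc n)) -` B"
    by (rule Suc.IH[OF prem B'])
  also have "\<dots> \<longleftrightarrow> range (cproj_prod A (Suc n)) \<subseteq> B" unfolding rg by blast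
  finally show ?case .
qed

theorem lemmaA2:
  fixes A :: "nat \<Rightarrow> 'a::chilbert_space set" and B :: "'a set" and n :: nat
  assumes "\<forall>i\<in>{1..n}. closed_csubspace (A i)"
    and "closed_csubspace B"
  shows "sand_prod A n \<subseteq> B \<longleftrightarrow> range (cproj_prod A n) \<subseteq> B"
  using main_gen[OF assms] .

end
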